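(* Let $X$ be a finite-dimensional real Banach space and let $A \subset X$ be a bounded set with $d(0, A) > 0$. Let $I$ be an index set with $m$ elements and $\{x_i : i \in I\} \subset S_X$. If for every selection $\phi$ of the subdifferential mapping $\partial\|\cdot\|$ one has $\sup_{i \in I} \phi(x_i)(x) > 0$ for every $x \in \overline{A}$, then there exist $y_i \in \mathbb{R}^+ x_i$ and $r_i > 0$ with $\|y_i\| \ge r_i$ for all $i \in I$ such that $\{B(y_i, r_i)\}_{i \in I}$ covers $A$.
   Context: $d(0,A)=\inf\{\|a\|:a\in A\}$; $\overline{A}$ is the closure. $\mathbb{R}^+ x_i = \{ t x_i : t > 0\}$; $B(c,r) = \{ z : \|c - z\| < r\}$. $\partial\|x\| = \{ x^* \in S_{X^*} : x^*(x) = \|x\|\}$ for $x \neq 0$; a selection of $\partial\|\cdot\|$ is a map $\phi$ with $\phi(x) \in \partial\|x\|$ for each non-zero $x$. *)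

theory Defs
  imports "HOL-Analysis.Analysis"
begin

definition norm_subdiff :: "'a::real_normed_vector \<Rightarrow> ('a \<Rightarrow>\<^sub>L real) set" where
  "norm_subdiff x = {f. norm f = 1 \<and> blinfun_apply f x = norm x}"

definition is_subdiff_selection :: "('a::real_normed_vector \<Rightarrow> ('a \<Rightarrow>\<^sub>L real)) \<Rightarrow> bool" where
  "is_subdiff_selection \<phi> \<longleftrightarrow> (\<forall>x. x \<noteq> 0 \<longrightarrow> \<phi> x \<in> norm_subdiff x)"

end

theory Submission
  imports Defs
begin

definition lin_on :: "'a::real_vector set \<Rightarrow> ('a \<Rightarrow> real) \<Rightarrow> bool" where
  "lin_on M f \<longleftrightarrow> (\<forall>u\<in>M. \<forall>v\<in>M. \<forall>a b. f (a *\<^sub>R u + b *\<^sub>R v) = a * f u + b * f v)"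

lemma lin_on_scale:
  assumes "lin_on M f" "u \<in> M"
  shows "f (a *\<^sub>R u) = a * f u"
  using assms unfolding lin_on_def by (metis add.right_neutral mult_zero_left scaleR_zero_left)

lemma hb_c:
  fixes f :: "'a::real_normed_vector \<Rightarrow> real"
  assumes M: "subspace M" and lf: "lin_on M f" and dom: "\<forall>w\<in>M. f w \<le> norm w"
  shows "\<exists>c. (\<forall>m\<in>M. f m - norm (m - v) \<le> c) \<and> (\<forall>m\<in>M. c \<le> norm (m + v) - f m)
     \<and> (\<forall>d. (\<forall>m\<in>M. f m - norm (m - v) \<le> d) \<longrightarrow> c \<le> d)"
proof -
  have key: "f m - norm (m - v) \<le> norm (m' + v) - f m'" if "m \<in> M" "m' \<in> M" for m m'
  proof -
    have "f m + f m' = f (m + m')"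
      using lf that unfolding lin_on_def by (metis mult_1 scaleR_one)
    also have "\<dots> \<le> norm (m + m')" using dom that M by (simp add: subspace_add)
    also have "\<dots> = norm ((m - v) + (m' + v))" by simp
    also have "\<dots> \<le> norm (m - v) + norm (m' + v)" by (rule norm_triangle_ineq)
    finally show ?thesis by simp
  qed
  let ?S = "(\<lambda>m. f m - norm (m - v)) ` M"
  have ne: "?S \<noteq> {}" using M subspace_0 by blast
  have bdd: "bdd_above ?S"
    using key[of _ 0] M subspace_0 by (auto intro!: bdd_aboveI2)
  show ?thesis
  proof (intro exI conjI ballI allI impI)
    show "f m - norm (m - v) \<le> Sup ?S" if "m \<in> M" for m
      using bdd that by (auto intro: cSup_upper)
    show "Sup ?S \<le> norm (m + v) - f m" if "m \<in> M" for m
      using ne key that by (auto intro!: cSup_least)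
    show "Sup ?S \<le> d" if "\<forall>m\<in>M. f m - norm (m - v) \<le> d" for d
      using ne that by (auto intro!: cSup_least)
  qed
qed

lemma hb_step:
  fixes f :: "'a::real_normed_vector \<Rightarrow> real"
  assumes M: "subspace M" and lf: "lin_on M f" and dom: "\<forall>w\<in>M. f w \<le> norm w"
    and c1: "\<forall>m\<in>M. f m - norm (m - v) \<le> c" and c2: "\<forall>m\<in>M. c \<le> norm (m + v) - f m"
    and vM: "v \<notin> M"
  shows "\<exists>g. lin_on (span (insert v M)) g \<and> (\<forall>w\<in>M. g w = f w) \<and> g v = c
     \<and> (\<forall>w\<in>span (insert v M). g w \<le> norm w)"
proof -
  have spM: "span M = M" using M by (simp only: span_eq_iff)
  have sp: "span (insert v M) = {m + t *\<^sub>R v | m t. m \<in> M}"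
  proof -
    have "span (insert v M) = {x. \<exists>k. x - k *\<^sub>R v \<in> M}"
      using span_insert[of v M] spM by (simp only:)
    also have "\<dots> = {m + t *\<^sub>R v | m t. m \<in> M}"
    proof (rule set_eqI, rule iffI)
      fix x assume "x \<in> {x. \<exists>k. x - k *\<^sub>R v \<in> M}"
      then obtain k where "x - k *\<^sub>R v \<in> M" by auto
      then show "x \<in> {m + t *\<^sub>R v |m t. m \<in> M}"
        by (auto intro!: exI[of _ "x - k *\<^sub>R v"] exI[of _ k])
    next
      fix x assume "x \<in> {m + t *\<^sub>R v |m t. m \<in> M}"
      then obtain m t where "m \<in> M" "x = m + t *\<^sub>R v" by auto
      then show "x \<in> {x. \<exists>k. x - k *\<^sub>R v \<in> M}" by (intro CollectI exI[of _ t]) simp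
    qed
    finally show ?thesis .
  qed
  have uniq: "m1 = m2 \<and> t1 = t2" if "m1 \<in> M" "m2 \<in> M" "m1 + t1 *\<^sub>R v = m2 + t2 *\<^sub>R v" for m1 m2 t1 t2
  proof (cases "t1 = t2")
    case True then show ?thesis using that by simp
  next
    case False
    have eq: "(t1 - t2) *\<^sub>R v = m2 - m1" using that(3) by (simp add: algebra_simps)
    have ne: "t1 - t2 \<noteq> 0" using False by simp
    have one: "(1 / (t1 - t2)) * (t1 - t2) = 1" using ne by simp
    have "v = ((1 / (t1 - t2)) * (t1 - t2)) *\<^sub>R v" by (simp only: one scaleR_one)
    also have "\<dots> = (1 / (t1 - t2)) *\<^sub>R ((t1 - t2) *\<^sub>R v)" by (rule scaleR_scaleR[symmetric])
    also have "\<dots> = (1 / (t1 - t2)) *\<^sub>R (m2 - m1)" by (simp only: eq)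
    finally have "v = (1 / (t1 - t2)) *\<^sub>R (m2 - m1)" .
    then have "v \<in> M" using M that(1,2) by (simp add: subspace_diff subspace_scale)
    then show ?thesis using vM by blast
  qed
  define g where "g w = (let p = (SOME p. fst p \<in> M \<and> w = fst p + snd p *\<^sub>R v) in f (fst p) + snd p * c)" for w
  have geq: "g (m + t *\<^sub>R v) = f m + t * c" if "m \<in> M" for m t
  proof -
    let ?p = "SOME p. fst p \<in> M \<and> m + t *\<^sub>R v = fst p + snd p *\<^sub>R v"
    have "fst ?p \<in> M \<and> m + t *\<^sub>R v = fst ?p + snd ?p *\<^sub>R v"
      by (rule someI[of _ "(m, t)"]) (use that in simp)
    then have "fst ?p = m \<and> snd ?p = t" using uniq[of "fst ?p" m "snd ?p" t] that by auto
    then show ?thesis unfolding g_def Let_def by simp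
  qed
  have f0: "f 0 = 0" using lin_on_scale[OF lf, of 0 0] subspace_0[OF M] by simp
  show ?thesis
  proof (intro exI conjI ballI)
    show "lin_on (span (insert v M)) g"
      unfolding lin_on_def sp
    proof (clarify)
      fix m1 t1 m2 t2 a b assume m: "m1 \<in> M" "m2 \<in> M"
      have e: "a *\<^sub>R (m1 + t1 *\<^sub>R v) + b *\<^sub>R (m2 + t2 *\<^sub>R v) = (a *\<^sub>R m1 + b *\<^sub>R m2) + (a * t1 + b * t2) *\<^sub>R v"
        by (simp add: algebra_simps)
      have "a *\<^sub>R m1 + b *\<^sub>R m2 \<in> M" using M m by (simp add: subspace_add subspace_scale)
      then have "g ((a *\<^sub>R m1 + b *\<^sub>R m2) + (a * t1 + b * t2) *\<^sub>R v) = f (a *\<^sub>R m1 + b *\<^sub>R m2) + (a * t1 + b * t2) * c"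
        by (rule geq)
      also have "f (a *\<^sub>R m1 + b *\<^sub>R m2) = a * f m1 + b * f m2" using lf m unfolding lin_on_def by blast
      finally show "g (a *\<^sub>R (m1 + t1 *\<^sub>R v) + b *\<^sub>R (m2 + t2 *\<^sub>R v)) = a * g (m1 + t1 *\<^sub>R v) + b * g (m2 + t2 *\<^sub>R v)"
        unfolding e using geq m by (simp add: algebra_simps)
    qed
    show "g w = f w" if "w \<in> M" for w using geq[OF that, of 0] by simp
    show "g v = c" using geq[of 0 1] subspace_0[OF M] f0 by simp
    show "g w \<le> norm w" if hw: "w \<in> span (insert v M)" for w
    proof -
      obtain m t where w: "w = m + t *\<^sub>R v" and m: "m \<in> M" using hw sp by blast
      have gw: "g w = f m + t * c" using geq m w by simp
      consider "t = 0" | "t > 0" | "t < 0" by linarith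
      then show ?thesis
      proof cases
        case 1 then show ?thesis using gw w dom m by simp
      next
        case 2
        have mt: "(1/t) *\<^sub>R m \<in> M" using M m by (simp add: subspace_scale)
        have "c \<le> norm ((1/t) *\<^sub>R m + v) - f ((1/t) *\<^sub>R m)" using c2 mt by blast
        also have "f ((1/t) *\<^sub>R m) = f m / t" using lin_on_scale[OF lf m] by simp
        also have "norm ((1/t) *\<^sub>R m + v) = norm w / t"
        proof -
          have "(1/t) *\<^sub>R m + v = (1/t) *\<^sub>R w" using 2 w by (simp add: algebra_simps)
          then show ?thesis using 2 by simp
        qed
        finally have "t * c \<le> t * (norm w / t - f m / t)" using 2 by simp
        also have "\<dots> = norm w - f m" using 2 by (simp add: field_simps)
        finally show ?thesis using gw by simp
      next
        case 3
        define s where "s = - t"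
        have s: "s > 0" using 3 s_def by simp
        have mt: "(1/s) *\<^sub>R m \<in> M" using M m by (simp add: subspace_scale)
        have "f ((1/s) *\<^sub>R m) - norm ((1/s) *\<^sub>R m - v) \<le> c" using c1 mt by blast
        also have "f ((1/s) *\<^sub>R m) = f m / s" using lin_on_scale[OF lf m] by simp
        also have "norm ((1/s) *\<^sub>R m - v) = norm w / s"
        proof -
          have "(1/s) *\<^sub>R m - v = (1/s) *\<^sub>R w" using s w s_def by (simp add: algebra_simps)
          then show ?thesis using s by simp
        qed
        finally have "(f m - norm w) / s \<le> c" by (simp add: diff_divide_distrib)
        then have "f m - norm w \<le> c * s" using pos_divide_le_eq[OF s] by blast
        then show ?thesis using gw s_def by (simp add: algebra_simps)
      qed
    qed
  qed
qed

lemma hb_fin: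
  fixes f :: "'a::real_normed_vector \<Rightarrow> real"
  assumes "finite S"
  shows "subspace M \<Longrightarrow> lin_on M f \<Longrightarrow> \<forall>w\<in>M. f w \<le> norm w \<Longrightarrow>
    \<exists>g. lin_on (span (M \<union> S)) g \<and> (\<forall>w\<in>M. g w = f w) \<and> (\<forall>w\<in>span (M \<union> S). g w \<le> norm w)"
  using assms(1)
proof (induction S arbitrary: M f)
  case empty
  then have "span M = M" using span_eq_iff by blast
  then show ?case using empty by (intro exI[of _ f]) (simp del: span_eq_iff)
next
  case (insert v S)
  show ?case
  proof (cases "v \<in> M")
    case True
    then have "M \<union> insert v S = M \<union> S" by auto
    then show ?thesis using insert.IH[OF insert.prems] by simp
  next
    case False
    obtain c where c: "\<forall>m\<in>M. f m - norm (m - v) \<le> c" "\<forall>m\<in>M. c \<le> norm (m + v) - f m"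
      using hb_c[OF insert.prems] by blast
    obtain g1 where g1: "lin_on (span (insert v M)) g1" "\<forall>w\<in>M. g1 w = f w"
        "\<forall>w\<in>span (insert v M). g1 w \<le> norm w"
      using hb_step[OF insert.prems c False] by blast
    obtain g where g: "lin_on (span (span (insert v M) \<union> S)) g" "\<forall>w\<in>span (insert v M). g w = g1 w"
        "\<forall>w\<in>span (span (insert v M) \<union> S). g w \<le> norm w"
      using insert.IH[OF subspace_span g1(1) g1(3)] by blast
    have eq: "span (span (insert v M) \<union> S) = span (M \<union> insert v S)"
    proof (rule span_subspace)
      show "span (insert v M) \<union> S \<subseteq> span (M \<union> insert v S)"
        by (metis Un_insert_left Un_insert_right Un_least Un_upper1 Un_upper2 span_mono span_superset subset_trans insert_mono)
      show "span (M \<union> insert v S) \<subseteq> span (span (insert v M) \<union> S)"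
        by (metis Un_insert_left Un_insert_right span_mono span_span span_superset sup.mono sup_ge1 dual_order.refl)
    qed simp
    have "M \<subseteq> span (insert v M)" by (meson span_superset subset_insertI subset_trans)
    then show ?thesis
    proof (intro exI[of _ g] conjI ballI)
      show "lin_on (span (M \<union> insert v S)) g" using g(1) eq by metis
      show "g w \<le> norm w" if "w \<in> span (M \<union> insert v S)" for w using g(3) eq that by metis
      show "g w = f w" if "w \<in> M" for w using g(2) g1(2) \<open>M \<subseteq> span (insert v M)\<close> that by auto
    qed
  qed
qed


lemma norming:
  fixes x z :: "'a::real_normed_vector" and B :: "'a set"
  assumes B: "finite B" "span B = UNIV" and nx: "norm x = 1"
    and hz: "\<forall>s\<ge>0. 1 \<le> norm (x - s *\<^sub>R z)"
  shows "\<exists>F::'a \<Rightarrow>\<^sub>L real. norm F = 1 \<and> blinfun_apply F x = 1 \<and> blinfun_apply F z \<le> 0"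
proof -
  have x0: "x \<noteq> 0" using nx by auto
  define M0 where "M0 = span {x}"
  have M0: "M0 = range (\<lambda>k. k *\<^sub>R x)" unfolding M0_def by (rule span_singleton)
  define f0 where "f0 w = (SOME k. w = k *\<^sub>R x)" for w
  have f0: "f0 (k *\<^sub>R x) = k" for k
  proof -
    have "k *\<^sub>R x = f0 (k *\<^sub>R x) *\<^sub>R x" unfolding f0_def by (rule someI[of _ k]) simp
    then show ?thesis using x0 by (metis scaleR_cancel_right)
  qed
  have lin0: "lin_on M0 f0"
    unfolding lin_on_def M0
  proof clarify
    fix k1 k2 a b
    have "a *\<^sub>R k1 *\<^sub>R x + b *\<^sub>R k2 *\<^sub>R x = (a * k1 + b * k2) *\<^sub>R x" by (simp add: algebra_simps)
    then show "f0 (a *\<^sub>R k1 *\<^sub>R x + b *\<^sub>R k2 *\<^sub>R x) = a * f0 (k1 *\<^sub>R x) + b * f0 (k2 *\<^sub>R x)"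
      by (simp add: f0)
  qed
  have dom0: "\<forall>w\<in>M0. f0 w \<le> norm w" unfolding M0 using nx by (auto simp: f0)
  have sM0: "subspace M0" unfolding M0_def by (rule subspace_span)
  have xM0: "x \<in> M0" unfolding M0_def by (simp add: span_base)
  have f0x: "f0 x = 1" using f0[of 1] by simp
  obtain M1 g1 where M1: "subspace M1" "lin_on M1 g1" "\<forall>w\<in>M1. g1 w \<le> norm w" "x \<in> M1"
      "g1 x = 1" "g1 z \<le> 0" "z \<in> M1"
  proof (cases "z \<in> M0")
    case True
    then obtain k where zk: "z = k *\<^sub>R x" using M0 by blast
    have "k \<le> 0"
    proof (rule ccontr)
      assume "\<not> k \<le> 0"
      then have "x - (1 / k) *\<^sub>R z = 0" using zk by simp
      then show False using hz[rule_format, of "1/k"] \<open>\<not> k \<le> 0\<close> by simp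
    qed
    then show ?thesis using that[OF sM0 lin0 dom0 xM0 f0x] zk f0 True by simp
  next
    case False
    obtain c where c: "\<forall>m\<in>M0. f0 m - norm (m - z) \<le> c" "\<forall>m\<in>M0. c \<le> norm (m + z) - f0 m"
        "\<forall>d. (\<forall>m\<in>M0. f0 m - norm (m - z) \<le> d) \<longrightarrow> c \<le> d"
      using hb_c[OF sM0 lin0 dom0, of z] by blast
    have "\<forall>m\<in>M0. f0 m - norm (m - z) \<le> 0"
    proof
      fix m assume "m \<in> M0"
      then obtain k where mk: "m = k *\<^sub>R x" using M0 by blast
      show "f0 m - norm (m - z) \<le> 0"
      proof (cases "k \<le> 0")
        case True
        have "k \<le> norm (m - z)" using True norm_ge_zero[of "m - z"] by linarith
        then show ?thesis using mk f0 by simp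
      next
        case False
        have "k *\<^sub>R x - z = k *\<^sub>R (x - (1/k) *\<^sub>R z)" using False by (simp add: algebra_simps)
        then have "norm (m - z) = k * norm (x - (1/k) *\<^sub>R z)" using mk False by simp
        moreover have "1 \<le> norm (x - (1/k) *\<^sub>R z)" using hz False by simp
        ultimately have "k \<le> norm (m - z)" using False
          by (metis mult.right_neutral mult_left_mono less_eq_real_def not_le)
        then show ?thesis using mk f0 by simp
      qed
    qed
    then have c0: "c \<le> 0" using c(3) by blast
    obtain g1 where g1: "lin_on (span (insert z M0)) g1" "\<forall>w\<in>M0. g1 w = f0 w" "g1 z = c"
        "\<forall>w\<in>span (insert z M0). g1 w \<le> norm w"
      using hb_step[OF sM0 lin0 dom0 c(1) c(2) False] by blast
    have "x \<in> span (insert z M0)" using xM0 by (simp add: span_base)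
    moreover have "z \<in> span (insert z M0)" by (simp add: span_base)
    ultimately show ?thesis using that[OF subspace_span g1(1) g1(4)] g1(2,3) xM0 f0x c0 by simp
  qed
  obtain g where g: "lin_on (span (M1 \<union> B)) g" "\<forall>w\<in>M1. g w = g1 w" "\<forall>w\<in>span (M1 \<union> B). g w \<le> norm w"
    using hb_fin[OF B(1) M1(1) M1(2) M1(3)] by blast
  have U: "span (M1 \<union> B) = UNIV" using B(2) by (metis span_mono sup_ge2 top.extremum_uniqueI)
  have lin: "g (a *\<^sub>R u + b *\<^sub>R v) = a * g u + b * g v" for a b u v
    using g(1) U unfolding lin_on_def by blast
  have le: "g w \<le> norm w" for w using g(3) U by blast
  have add: "g (u + v) = g u + g v" for u v using lin[of 1 u 1 v] by simp
  have sc: "g (r *\<^sub>R u) = r * g u" for r u using lin[of r u 0 u] by simp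
  have ab: "norm (g w) \<le> norm w * 1" for w
  proof -
    have "- g w \<le> norm w" using le[of "- w"] sc[of "-1" w] by simp
    then show ?thesis using le[of w] by simp
  qed
  have bl: "bounded_linear g" by (rule bounded_linear_intro[OF add _ ab]) (simp add: sc)
  define F where "F = Blinfun g"
  have Fa: "blinfun_apply F = g" unfolding F_def using bl by (rule bounded_linear_Blinfun_apply)
  have gx: "g x = 1" using g(2) M1(4,5) by simp
  have gz: "g z \<le> 0"
  proof -
    show ?thesis using g(2) M1(6,7) by simp
  qed
  have "norm F \<le> 1" by (rule norm_blinfun_bound) (use ab Fa in auto)
  moreover have "1 \<le> norm F" using norm_blinfun[of F x] Fa gx nx by simp
  ultimately have "norm F = 1" by simp
  then show ?thesis using Fa gx gz by blast
qed


lemma box_compact: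
  fixes C :: "'a set" and R :: real
  shows "compact (PiE UNIV (\<lambda>b. if b \<in> C then {-R..R} else {0::real}))"
proof -
  have "compactin (product_topology (\<lambda>_. euclidean) UNIV) (PiE UNIV (\<lambda>b. if b \<in> C then {-R..R} else {0::real}))"
    by (subst compactin_PiE) auto
  then show ?thesis by (simp add: euclidean_product_topology)
qed

lemma fd_compact:
  fixes S :: "'a::real_normed_vector set" and B :: "'a set"
  assumes B: "finite B" "span B = UNIV" and bS: "bounded S" and cS: "closed S"
  shows "compact S"
proof -
  obtain C where C: "C \<subseteq> B" "independent C" "B \<subseteq> span C"
    using maximal_independent_subset[of B] by blast
  have fC: "finite C" using C(1) B(1) finite_subset by blast
  have spC: "span C = UNIV" using B(2) C(3) by (metis span_mono span_span top.extremum_uniqueI)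
  show ?thesis
  proof (cases "C = {}")
    case True
    then have "(UNIV :: 'a set) = {0}" using spC by simp
    then have "S \<subseteq> {0}" by blast
    then have "finite S" using finite_subset by blast
    then show ?thesis by (rule finite_imp_compact)
  next
    case False
    define E where "E l = (\<Sum>b\<in>C. l b *\<^sub>R b)" for l :: "'a \<Rightarrow> real"
    have contE: "continuous_on UNIV E" unfolding E_def by (intro continuous_intros) auto
    define P where "P R = PiE UNIV (\<lambda>b. if b \<in> C then {-R..R} else {0::real})" for R :: real
    have memP: "l \<in> P R \<longleftrightarrow> (\<forall>b. (b \<in> C \<longrightarrow> \<bar>l b\<bar> \<le> R) \<and> (b \<notin> C \<longrightarrow> l b = 0))" for l R
      unfolding P_def by (auto simp: PiE_iff abs_le_iff)
    define K where "K = P 1 \<inter> {l. (\<Sum>b\<in>C. \<bar>l b\<bar>) = 1}"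
    have cK: "compact K"
    proof -
      have "closed {l :: 'a \<Rightarrow> real. (\<Sum>b\<in>C. \<bar>l b\<bar>) = 1}"
        by (rule closed_Collect_eq) (intro continuous_intros, auto)
      then show ?thesis unfolding K_def P_def using box_compact by (rule compact_Int_closed[rotated])
    qed
    obtain b0 where b0: "b0 \<in> C" using False by blast
    have Kne: "K \<noteq> {}"
    proof -
      have "(\<lambda>b. if b = b0 then 1 else 0) \<in> K"
        unfolding K_def using b0 fC by (auto simp: memP if_distrib sum.delta cong: if_cong)
      then show ?thesis by blast
    qed
    have contN: "continuous_on K (\<lambda>l. norm (E l))"
      using contE by (intro continuous_intros) (auto intro: continuous_on_subset)
    obtain l0 where l0: "l0 \<in> K" "\<forall>l\<in>K. norm (E l0) \<le> norm (E l)"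
      using continuous_attains_inf[OF cK Kne contN] by blast
    define m where "m = norm (E l0)"
    have m: "m > 0"
    proof (rule ccontr)
      assume "\<not> m > 0"
      then have "E l0 = 0" unfolding m_def by simp
      then have "\<forall>b\<in>C. l0 b = 0" using C(2) fC unfolding E_def
        using dependent_finite[OF fC] by blast
      then have "(\<Sum>b\<in>C. \<bar>l0 b\<bar>) = 0" by simp
      then show False using l0(1) unfolding K_def by simp
    qed
    have lower: "(\<Sum>b\<in>C. \<bar>l b\<bar>) * m \<le> norm (E l)" for l
    proof (cases "(\<Sum>b\<in>C. \<bar>l b\<bar>) = 0")
      case True then show ?thesis by simp
    next
      case False
      define s where "s = (\<Sum>b\<in>C. \<bar>l b\<bar>)"
      have s: "s > 0" using False s_def by (simp add: order_less_le sum_nonneg)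
      define l' where "l' b = (if b \<in> C then l b / s else 0)" for b
      have "(\<Sum>b\<in>C. \<bar>l' b\<bar>) = (\<Sum>b\<in>C. \<bar>l b\<bar> / s)" unfolding l'_def using s by (intro sum.cong) auto
      also have "\<dots> = 1" using s by (simp add: s_def sum_divide_distrib[symmetric])
      finally have sl': "(\<Sum>b\<in>C. \<bar>l' b\<bar>) = 1" .
      have "\<bar>l' b\<bar> \<le> 1" if "b \<in> C" for b
      proof -
        have "\<bar>l' b\<bar> \<le> (\<Sum>b\<in>C. \<bar>l' b\<bar>)" by (rule member_le_sum) (use that fC in auto)
        then show ?thesis using sl' by simp
      qed
      then have "l' \<in> K" unfolding K_def using sl' by (auto simp: memP l'_def)
      then have "m \<le> norm (E l')" using l0(2) m_def by blast
      also have "E l' = (1 / s) *\<^sub>R E l" unfolding E_def l'_def scaleR_sum_right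
        by (intro sum.cong) auto
      also have "norm \<dots> = norm (E l) / s" using s by simp
      finally have "m \<le> norm (E l) / s" .
      then show ?thesis using s by (simp add: s_def pos_le_divide_eq mult.commute)
    qed
    obtain R0 where R0: "\<forall>w\<in>S. norm w \<le> R0" using bS bounded_iff by blast
    have sub: "S \<subseteq> E ` P (R0 / m)"
    proof
      fix w assume w: "w \<in> S"
      define l where "l b = (if b \<in> C then representation C w b else 0)" for b
      have El: "E l = w"
      proof -
        have "E l = (\<Sum>b\<in>C. representation C w b *\<^sub>R b)" unfolding E_def l_def by (intro sum.cong) auto
        also have "\<dots> = w" using sum_representation_eq[OF C(2) _ fC order_refl] spC by simp
        finally show ?thesis .
      qed
      have "(\<Sum>b\<in>C. \<bar>l b\<bar>) \<le> R0 / m"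
      proof -
        have "norm w \<le> R0" using R0 w by blast
        then have "(\<Sum>b\<in>C. \<bar>l b\<bar>) * m \<le> R0" using lower[of l] El by simp
        then show ?thesis using m by (simp add: pos_le_divide_eq)
      qed
      moreover have "\<bar>l b\<bar> \<le> (\<Sum>b\<in>C. \<bar>l b\<bar>)" if "b \<in> C" for b
        by (rule member_le_sum) (use that fC in auto)
      ultimately have "l \<in> P (R0 / m)" unfolding memP l_def by (auto intro: order_trans)
      then show "w \<in> E ` P (R0 / m)" using El by blast
    qed
    have "compact (E ` P (R0 / m))"
      by (rule compact_continuous_image[OF continuous_on_subset[OF contE]]) (auto simp: P_def box_compact)
    then have "compact (E ` P (R0 / m) \<inter> S)" using cS by (rule compact_Int_closed)
    moreover have "E ` P (R0 / m) \<inter> S = S" using sub by blast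
    ultimately show ?thesis by simp
  qed
qed


theorem mainTheorem10:
  fixes A :: "'a::banach set" and I :: "'i set" and x :: "'i \<Rightarrow> 'a" and m :: nat
  assumes findim: "\<exists>B. finite B \<and> span B = (UNIV :: 'a set)"
    and bdd: "bounded A"
    and dist_pos: "\<exists>\<delta>>0. \<forall>a\<in>A. \<delta> \<le> norm a"
    and card_I: "finite I" "card I = m"
    and unit: "\<forall>i\<in>I. norm (x i) = 1"
    and hyp: "\<forall>\<phi>. is_subdiff_selection \<phi> \<longrightarrow>
               (\<forall>z\<in>closure A. \<exists>i\<in>I. blinfun_apply (\<phi> (x i)) z > 0)"
  shows "\<exists>y r. (\<forall>i\<in>I. (\<exists>t>0. y i = t *\<^sub>R x i) \<and> r i > 0 \<and> norm (y i) \<ge> r i)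
              \<and> A \<subseteq> (\<Union>i\<in>I. ball (y i) (r i))"
proof -
  obtain B :: "'a set" where B: "finite B" "span B = UNIV" using findim by blast
  have cover: "\<forall>z\<in>closure A. \<exists>i\<in>I. \<exists>t>0. norm (t *\<^sub>R x i - z) < t"
  proof (rule ccontr)
    assume "\<not> ?thesis"
    then obtain z where z: "z \<in> closure A" and nz: "\<forall>i\<in>I. \<forall>t>0. t \<le> norm (t *\<^sub>R x i - z)"
      by (metis not_less)
    have hz: "\<forall>s\<ge>0. 1 \<le> norm (x i - s *\<^sub>R z)" if i: "i \<in> I" for i
    proof (intro allI impI)
      fix s :: real assume s: "s \<ge> 0"
      show "1 \<le> norm (x i - s *\<^sub>R z)"
      proof (cases "s = 0")
        case True then show ?thesis using unit i by simp
      next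
        case False
        then have s': "s > 0" using s by simp
        have "1 / s \<le> norm ((1 / s) *\<^sub>R x i - z)" using nz i s' by simp
        also have "(1 / s) *\<^sub>R x i - z = (1 / s) *\<^sub>R (x i - s *\<^sub>R z)" using s' by (simp add: algebra_simps)
        also have "norm \<dots> = norm (x i - s *\<^sub>R z) / s" using s' by simp
        finally show ?thesis using s' by (simp add: divide_le_cancel)
      qed
    qed
    have ex: "\<exists>F. F \<in> norm_subdiff w \<and> (\<forall>i\<in>I. x i = w \<longrightarrow> blinfun_apply F z \<le> 0)" if w: "w \<noteq> 0" for w
    proof (cases "\<exists>i\<in>I. x i = w")
      case True
      then obtain i where i: "i \<in> I" "x i = w" by blast
      obtain F :: "'a \<Rightarrow>\<^sub>L real" where F: "norm F = 1" "blinfun_apply F (x i) = 1" "blinfun_apply F z \<le> 0"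
        using norming[OF B unit[rule_format, OF i(1)] hz[OF i(1)]] by blast
      then show ?thesis using i unit unfolding norm_subdiff_def by (intro exI[of _ F]) auto
    next
      case False
      define u where "u = (1 / norm w) *\<^sub>R w"
      have nu: "norm u = 1" using w unfolding u_def by simp
      obtain F :: "'a \<Rightarrow>\<^sub>L real" where F: "norm F = 1" "blinfun_apply F u = 1"
        using norming[OF B nu, of 0] nu by auto
      have "blinfun_apply F u = (1 / norm w) * blinfun_apply F w"
        unfolding u_def by (simp add: blinfun.scaleR_right)
      then have "blinfun_apply F w = norm w" using F(2) w by (simp add: field_simps)
      then show ?thesis using F(1) False unfolding norm_subdiff_def by (intro exI[of _ F]) auto
    qed
    define \<phi> where "\<phi> w = (SOME F. F \<in> norm_subdiff w \<and> (\<forall>i\<in>I. x i = w \<longrightarrow> blinfun_apply F z \<le> 0))" for w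
    have \<phi>: "\<phi> w \<in> norm_subdiff w \<and> (\<forall>i\<in>I. x i = w \<longrightarrow> blinfun_apply (\<phi> w) z \<le> 0)" if "w \<noteq> 0" for w
      unfolding \<phi>_def by (rule someI_ex[OF ex[OF that]])
    have sel: "is_subdiff_selection \<phi>" unfolding is_subdiff_selection_def using \<phi> by blast
    obtain i where i: "i \<in> I" "blinfun_apply (\<phi> (x i)) z > 0" using hyp sel z by blast
    have "x i \<noteq> 0" using unit i(1) by auto
    then have "blinfun_apply (\<phi> (x i)) z \<le> 0" using \<phi> i(1) by blast
    then show False using i(2) by simp
  qed
  have cA: "compact (closure A)" by (rule fd_compact[OF B bounded_closure[OF bdd] closed_closure])
  let ?f = "\<lambda>p. ball (snd p *\<^sub>R x (fst p)) (snd p)"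
  have sub: "closure A \<subseteq> (\<Union>p\<in>I \<times> {0<..}. ?f p)"
  proof
    fix z assume "z \<in> closure A"
    then obtain i t where "i \<in> I" "t > 0" "norm (t *\<^sub>R x i - z) < t" using cover by blast
    then show "z \<in> (\<Union>p\<in>I \<times> {0<..}. ?f p)" by (auto simp: dist_norm intro!: bexI[of _ "(i, t)"])
  qed
  obtain D where D: "D \<subseteq> I \<times> {0<..}" "finite D" "closure A \<subseteq> (\<Union>p\<in>D. ?f p)"
    using compactE_image[OF cA _ sub] by blast
  define T where "T = 1 + (\<Sum>p\<in>D. snd p)"
  have Dpos: "\<forall>p\<in>D. snd p > 0" using D(1) by auto
  have T: "T > 0" unfolding T_def using Dpos by (simp add: add_pos_nonneg less_imp_le sum_nonneg)
  have Tge: "snd p \<le> T" if "p \<in> D" for p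
  proof -
    have "snd p \<le> (\<Sum>p\<in>D. snd p)" by (rule member_le_sum) (use that Dpos D(2) in \<open>auto simp: less_imp_le\<close>)
    then show ?thesis unfolding T_def by simp
  qed
  show ?thesis
  proof (intro exI[of _ "\<lambda>i. T *\<^sub>R x i"] exI[of _ "\<lambda>i. T"] conjI ballI)
    fix i assume i: "i \<in> I"
    show "\<exists>t>0. T *\<^sub>R x i = t *\<^sub>R x i" using T by blast
    show "T > 0" by (rule T)
    show "T \<le> norm (T *\<^sub>R x i)" using unit i T by simp
  next
    show "A \<subseteq> (\<Union>i\<in>I. ball (T *\<^sub>R x i) T)"
    proof
      fix w assume "w \<in> A"
      then have "w \<in> closure A" by (rule closure_subset[THEN subsetD])
      then obtain p where p: "p \<in> D" "w \<in> ?f p" using D(3) by blast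
      obtain i t where it: "p = (i, t)" by (cases p)
      have i: "i \<in> I" and t: "t > 0" using D(1) p(1) it by auto
      have tT: "t \<le> T" using Tge[OF p(1)] it by simp
      have "norm (T *\<^sub>R x i - w) \<le> norm (T *\<^sub>R x i - t *\<^sub>R x i) + norm (t *\<^sub>R x i - w)"
        using norm_triangle_ineq[of "T *\<^sub>R x i - t *\<^sub>R x i" "t *\<^sub>R x i - w"] by simp
      also have "norm (T *\<^sub>R x i - t *\<^sub>R x i) = T - t"
        using unit i tT by (simp add: scaleR_diff_left[symmetric])
      also have "norm (t *\<^sub>R x i - w) < t" using p(2) it by (simp add: dist_norm)
      finally have "norm (T *\<^sub>R x i - w) < T" by simp
      then show "w \<in> (\<Union>i\<in>I. ball (T *\<^sub>R x i) T)" using i by (auto simp: dist_norm)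
    qed
  qed
qed

end
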